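(* Let $H$ be a separable complex Hilbert space and $U:H\to H$ a unitary operator. Then $U$ is recurrent if and only if $U$ is rigid.
   Context: $U$ is recurrent if for every non-empty open $V\subset H$ there is a positive integer $k$ with $V\cap U^{-k}(V)\neq\emptyset$; $U$ is rigid if there is an increasing sequence of positive integers $(k_n)$ with $U^{k_n}x\to x$ for every $x\in H$. *)

theory Defs
  imports "HOL-Analysis.Analysis"
begin

text \<open>A complex Hilbert space is
represented as a real Hilbert space (type of class real_inner and complete_space)
together with an orthogonal complex structure J (multiplication by i):
J is real-linear, J (J x) = -x and J preserves the real inner product.
Complex scalar multiplication is (a + i b) x = a x + b J x and the complex inner
product is x \<bullet> y + i (x \<bullet> J y) (up to convention); this is exactly a complex
Hilbert space, and every complex Hilbert space arises this way.\<close>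

definition complex_structure :: "('a::real_inner \<Rightarrow> 'a) \<Rightarrow> bool" where
  "complex_structure J \<longleftrightarrow> linear J \<and> (\<forall>x. J (J x) = - x) \<and> (\<forall>x y. J x \<bullet> J y = x \<bullet> y)"

definition scaleJ :: "('a::real_vector \<Rightarrow> 'a) \<Rightarrow> complex \<Rightarrow> 'a \<Rightarrow> 'a" where
  "scaleJ J c x = Re c *\<^sub>R x + Im c *\<^sub>R J x"

text \<open>Complex inner product induced by J (linear in the first argument).\<close>
definition cinnerJ :: "('a::real_inner \<Rightarrow> 'a) \<Rightarrow> 'a \<Rightarrow> 'a \<Rightarrow> complex" where
  "cinnerJ J x y = Complex (x \<bullet> y) (x \<bullet> J y)"

definition unitary_op :: "('a::real_inner \<Rightarrow> 'a) \<Rightarrow> ('a \<Rightarrow> 'a) \<Rightarrow> bool" where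
  "unitary_op J U \<longleftrightarrow>
     (\<forall>x y. U (x + y) = U x + U y) \<and> (\<forall>c x. U (scaleJ J c x) = scaleJ J c (U x)) \<and>
     surj U \<and> (\<forall>x y. cinnerJ J (U x) (U y) = cinnerJ J x y)"

definition separable_type :: "'a::topological_space itself \<Rightarrow> bool" where
  "separable_type _ \<longleftrightarrow> (\<exists>D::'a set. countable D \<and> closure D = UNIV)"

definition recurrent :: "('a::topological_space \<Rightarrow> 'a) \<Rightarrow> bool" where
  "recurrent U \<longleftrightarrow> (\<forall>V. open V \<and> V \<noteq> {} \<longrightarrow> (\<exists>k::nat. k > 0 \<and> V \<inter> (U ^^ k) -` V \<noteq> {}))"

definition rigid :: "('a::topological_space \<Rightarrow> 'a) \<Rightarrow> bool" where
  "rigid U \<longleftrightarrow> (\<exists>k::nat \<Rightarrow> nat. strict_mono k \<and> (\<forall>n. k n > 0) \<and>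
                    (\<forall>x. (\<lambda>n. (U ^^ k n) x) \<longlonglongrightarrow> x))"

end

theory Submission
  imports Defs
begin

locale isoU =
  fixes U :: "'a::real_inner \<Rightarrow> 'a"
  assumes lin: "linear U" and inn: "\<And>x y. U x \<bullet> U y = x \<bullet> y" and sur: "surj U"
begin

lemma T_linear: "linear (U ^^ k)"
proof (induction k)
  case 0 show ?case using linear_id by (simp add: id_def)
next
  case (Suc k) show ?case using linear_compose[OF Suc lin] by (simp add: o_def)
qed

lemma T_inner: "(U ^^ k) x \<bullet> (U ^^ k) y = x \<bullet> y"
  by (induction k) (auto simp: inn)

lemma T_norm: "norm ((U ^^ k) x) = norm x"
  by (simp add: norm_eq_sqrt_inner T_inner)

lemma T_comm: "(U ^^ j) ((U ^^ k) x) = (U ^^ k) ((U ^^ j) x)"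
  by (metis funpow_add add.commute comp_apply)

lemma T_surj: "\<exists>p. (U ^^ k) p = x"
proof (induction k arbitrary: x)
  case 0 then show ?case by auto
next
  case (Suc k)
  obtain q where "U q = x" using sur by (metis surjD)
  moreover obtain p where "(U ^^ k) p = q" using Suc by blast
  ultimately show ?case by auto
qed

lemma T_diff: "(U ^^ k) (x - y) = (U ^^ k) x - (U ^^ k) y"
  using linear_diff[OF T_linear] .
lemma T_add: "(U ^^ k) (x + y) = (U ^^ k) x + (U ^^ k) y"
  using linear_add[OF T_linear] .
lemma T_scale: "(U ^^ k) (r *\<^sub>R x) = r *\<^sub>R (U ^^ k) x"
  using linear_scale[OF T_linear] .

definition W :: "'a \<Rightarrow> 'a set" where
  "W x = {w. \<exists>C. \<forall>k. norm ((U ^^ k) w - w) \<le> C * norm ((U ^^ k) x - x)}"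

lemma W_comb: assumes "w \<in> W x" "v \<in> W x" shows "w + t *\<^sub>R v \<in> W x"
proof -
  obtain C1 where C1: "\<And>k. norm ((U ^^ k) w - w) \<le> C1 * norm ((U ^^ k) x - x)"
    using assms(1) unfolding W_def by auto
  obtain C2 where C2: "\<And>k. norm ((U ^^ k) v - v) \<le> C2 * norm ((U ^^ k) x - x)"
    using assms(2) unfolding W_def by auto
  have "norm ((U ^^ k) (w + t *\<^sub>R v) - (w + t *\<^sub>R v)) \<le> (C1 + \<bar>t\<bar> * C2) * norm ((U ^^ k) x - x)" for k
  proof -
    have "(U ^^ k) (w + t *\<^sub>R v) - (w + t *\<^sub>R v) = ((U ^^ k) w - w) + t *\<^sub>R ((U ^^ k) v - v)"
      by (simp add: T_add T_scale algebra_simps)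
    then have "norm ((U ^^ k) (w + t *\<^sub>R v) - (w + t *\<^sub>R v)) \<le> norm ((U ^^ k) w - w) + \<bar>t\<bar> * norm ((U ^^ k) v - v)"
      by (metis norm_scaleR norm_triangle_ineq)
    also have "\<dots> \<le> C1 * norm ((U ^^ k) x - x) + \<bar>t\<bar> * (C2 * norm ((U ^^ k) x - x))"
      by (intro add_mono C1 mult_left_mono C2) auto
    finally show ?thesis by (simp add: algebra_simps)
  qed
  then show ?thesis unfolding W_def by blast
qed

lemma W_zero: "0 \<in> W x"
  unfolding W_def by (rule CollectI, rule exI[of _ 0]) (simp add: T_diff[of _ 0 0, simplified])

lemma W_self: "x \<in> W x"
  unfolding W_def by (rule CollectI, rule exI[of _ 1]) simp

lemma W_pre: assumes "(U ^^ k) p = x" shows "p \<in> W x"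
proof -
  have "norm ((U ^^ j) p - p) \<le> 1 * norm ((U ^^ j) x - x)" for j
  proof -
    have "norm ((U ^^ j) p - p) = norm ((U ^^ k) ((U ^^ j) p - p))" by (simp add: T_norm)
    also have "\<dots> = norm ((U ^^ j) x - x)" using assms by (simp add: T_diff T_comm)
    finally show ?thesis by simp
  qed
  then show ?thesis unfolding W_def by blast
qed

lemma W_T: "(U ^^ k) x \<in> W x"
proof -
  have "norm ((U ^^ j) ((U ^^ k) x) - (U ^^ k) x) \<le> 1 * norm ((U ^^ j) x - x)" for j
  proof -
    have "(U ^^ j) ((U ^^ k) x) - (U ^^ k) x = (U^^k) ((U^^j) x - x)" by (simp add: T_comm T_diff)
    then show ?thesis by (simp add: T_norm)
  qed
  then show ?thesis unfolding W_def by blast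
qed

lemma W_diff: "w \<in> W x \<Longrightarrow> v \<in> W x \<Longrightarrow> w - v \<in> W x"
  using W_comb[of w x v "-1"] by simp

lemma near_orth:
  assumes w: "w \<in> W x" and Dle: "\<And>v. v \<in> W x \<Longrightarrow> D \<le> (norm (y - v))\<^sup>2"
    and wlt: "(norm (y - w))\<^sup>2 < D + \<eta>" and v: "v \<in> W x"
  shows "((y - w) \<bullet> v)\<^sup>2 \<le> \<eta> * (norm v)\<^sup>2"
proof (cases "v = 0")
  case True then show ?thesis by simp
next
  case False
  define z where "z = y - w"
  define t where "t = (z \<bullet> v) / (norm v)\<^sup>2"
  have nv: "(norm v)\<^sup>2 > 0" using False by simp
  have "w + t *\<^sub>R v \<in> W x" using W_comb[OF w v] .
  then have "D \<le> (norm (z - t *\<^sub>R v))\<^sup>2" using Dle[of "w + t *\<^sub>R v"] by (simp add: z_def algebra_simps)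
  also have "(norm (z - t *\<^sub>R v))\<^sup>2 = (norm z)\<^sup>2 - 2*t*(z \<bullet> v) + t\<^sup>2*(norm v)\<^sup>2"
    unfolding power2_norm_eq_inner by (simp add: inner_diff_left inner_diff_right inner_commute algebra_simps power2_eq_square)
  also have "\<dots> = (norm z)\<^sup>2 - (z \<bullet> v)\<^sup>2 / (norm v)\<^sup>2"
    using nv by (simp add: t_def field_simps power2_eq_square)
  finally have "(z \<bullet> v)\<^sup>2 / (norm v)\<^sup>2 < \<eta>" using wlt by (simp add: z_def)
  then show ?thesis using nv by (simp add: z_def field_simps)
qed

lemma pair:
  assumes "\<epsilon> > 0"
  shows "\<exists>u \<delta>. \<delta> > 0 \<and> (\<forall>k. norm ((U ^^ k) u - u) < \<delta> \<longrightarrow>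
            norm ((U ^^ k) x - x) < \<epsilon> \<and> norm ((U ^^ k) y - y) < \<epsilon>)"
proof -
  define s where "s = \<epsilon> / 8"
  have s: "s > 0" using assms by (simp add: s_def)
  define \<eta> where "\<eta> = s\<^sup>2"
  have eta: "\<eta> > 0" using s by (simp add: \<eta>_def)
  define S where "S = (\<lambda>w. (norm (y - w))\<^sup>2) ` W x"
  define D where "D = Inf S"
  have Sne: "S \<noteq> {}" using W_zero unfolding S_def by auto
  have Sbdd: "bdd_below S" unfolding S_def by (rule bdd_belowI[of _ 0]) auto
  have Dle: "\<And>v. v \<in> W x \<Longrightarrow> D \<le> (norm (y - v))\<^sup>2"
    unfolding D_def by (rule cInf_lower[OF _ Sbdd]) (auto simp: S_def)
  obtain w where w: "w \<in> W x" and wlt: "(norm (y - w))\<^sup>2 < D + \<eta>"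
    using cInf_lessD[OF Sne, of "D + \<eta>"] eta unfolding D_def S_def by auto
  define z where "z = y - w"
  have orth: "\<And>v. v \<in> W x \<Longrightarrow> (z \<bullet> v)\<^sup>2 \<le> \<eta> * (norm v)\<^sup>2"
    unfolding z_def by (rule near_orth[OF w Dle wlt]) auto
  obtain C where C: "\<And>k. norm ((U ^^ k) w - w) \<le> C * norm ((U ^^ k) x - x)"
    using w unfolding W_def by auto
  define M where "M = max C 1"
  have M1: "M \<ge> 1" and MC: "C \<le> M" by (auto simp: M_def)
  define u where "u = M *\<^sub>R x + z"
  show ?thesis
  proof (intro exI conjI allI impI)
    show "s > 0" by (rule s)
    fix k assume uk: "norm ((U ^^ k) u - u) < s"
    define a where "a = (U ^^ k) x - x"
    define b where "b = (U ^^ k) z - z"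
    have ua: "(U ^^ k) u - u = M *\<^sub>R a + b"
      by (simp add: u_def a_def b_def T_add T_scale algebra_simps)
    obtain p where p: "(U ^^ k) p = x" using T_surj by blast
    define c where "c = x - p"
    have Tc: "(U ^^ k) c = a" by (simp add: c_def a_def T_diff p)
    have pW: "p \<in> W x" by (rule W_pre[OF p])
    have aW: "a \<in> W x" unfolding a_def
      using W_diff[OF W_T W_self] by simp
    have caW: "c - a \<in> W x" unfolding c_def using W_diff[OF W_diff[OF W_self pW] aW] .
    have nc: "norm c = norm a" using Tc T_norm by metis
    have nca: "norm (c - a) \<le> 2 * norm a"
      using norm_triangle_ineq4[of c a] nc by simp
    have ab: "a \<bullet> b = (c - a) \<bullet> z"
    proof -
      have "a \<bullet> b = (U ^^ k) c \<bullet> (U ^^ k) z - a \<bullet> z" by (simp add: b_def Tc inner_diff_right)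
      also have "\<dots> = (c - a) \<bullet> z" by (simp add: T_inner inner_diff_left)
      finally show ?thesis .
    qed
    have "(a \<bullet> b)\<^sup>2 \<le> \<eta> * (norm (c - a))\<^sup>2" using orth[OF caW] ab by (simp add: inner_commute)
    also have "\<dots> \<le> \<eta> * (2 * norm a)\<^sup>2"
      using eta nca by (intro mult_left_mono power_mono) auto
    also have "\<dots> = (2 * s * norm a)\<^sup>2" by (simp add: \<eta>_def power2_eq_square)
    finally have sq1: "(a \<bullet> b)\<^sup>2 \<le> (2 * s * norm a)\<^sup>2" .
    have r0: "2 * s * norm a \<ge> 0" using s by simp
    have "\<bar>a \<bullet> b\<bar> \<le> 2 * s * norm a"
      by (metis abs_le_square_iff abs_of_nonneg r0 sq1)
    then have abl: "a \<bullet> b \<ge> - (2 * s * norm a)" by linarith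
    have "(norm (M *\<^sub>R a + b))\<^sup>2 = M\<^sup>2 * (norm a)\<^sup>2 + 2 * M * (a \<bullet> b) + (norm b)\<^sup>2"
      unfolding power2_norm_eq_inner by (simp add: inner_add_left inner_add_right inner_commute algebra_simps power2_eq_square)
    also have "\<dots> \<ge> M\<^sup>2 * (norm a)\<^sup>2 - 4 * M * s * norm a + (norm b)\<^sup>2"
    proof -
      have "M * (-(2 * s * norm a)) \<le> M * (a \<bullet> b)" using abl M1 by (intro mult_left_mono) auto
      then show ?thesis by (simp add: algebra_simps)
    qed
    finally have e1: "M\<^sup>2 * (norm a)\<^sup>2 - 4 * M * s * norm a + (norm b)\<^sup>2 \<le> (norm (M *\<^sub>R a + b))\<^sup>2" .
    have e2: "(norm (M *\<^sub>R a + b))\<^sup>2 < s\<^sup>2"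
      using uk ua by (metis norm_ge_zero power_strict_mono zero_less_numeral)
    have sq: "(M * norm a - 4 * s)\<^sup>2 \<ge> 0" by simp
    have key: "M\<^sup>2 * (norm a)\<^sup>2 / 2 + (norm b)\<^sup>2 < 9 * s\<^sup>2"
      using e1 e2 sq by (simp add: power2_eq_square algebra_simps)
    have p0: "M\<^sup>2 * (norm a)\<^sup>2 \<ge> 0" by simp
    have s2: "s\<^sup>2 > 0" using s by simp
    have e3: "(3 * s)\<^sup>2 = 9 * s\<^sup>2" "(5 * s)\<^sup>2 = 25 * s\<^sup>2" "(M * norm a)\<^sup>2 = M\<^sup>2 * (norm a)\<^sup>2"
      by (simp_all add: power_mult_distrib)
    have nb2: "(norm b)\<^sup>2 < (3 * s)\<^sup>2" using key p0 e3 by linarith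
    have nb: "norm b < 3 * s" using power_less_imp_less_base[OF nb2] s by simp
    have na2: "(M * norm a)\<^sup>2 < (5 * s)\<^sup>2" using key s2 e3 zero_le_power2[of "norm b"] by linarith
    have na: "M * norm a < 5 * s" using power_less_imp_less_base[OF na2] s by simp
    have nana: "norm a \<le> M * norm a" using M1 by (simp add: mult_le_cancel_right1)
    show "norm ((U ^^ k) x - x) < \<epsilon>" using na nana s by (simp add: a_def s_def)
    have "(U ^^ k) y - y = b + ((U ^^ k) w - w)"
      by (simp add: b_def z_def T_diff)
    then have "norm ((U ^^ k) y - y) \<le> norm b + C * norm a"
      using C[of k] norm_triangle_ineq[of b "(U ^^ k) w - w"] by (simp add: a_def)
    also have "C * norm a \<le> M * norm a" using MC by (simp add: mult_right_mono)
    finally show "norm ((U ^^ k) y - y) < \<epsilon>" using nb na by (simp add: s_def)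
  qed
qed

lemma ctrl:
  assumes "finite F" "\<epsilon> > 0"
  shows "\<exists>u \<delta>. \<delta> > 0 \<and> (\<forall>k. norm ((U ^^ k) u - u) < \<delta> \<longrightarrow> (\<forall>v\<in>F. norm ((U ^^ k) v - v) < \<epsilon>))"
  using assms(1)
proof (induction F rule: finite_induct)
  case empty
  have "(1::real) > 0 \<and> (\<forall>k. norm ((U ^^ k) 0 - 0) < 1 \<longrightarrow> (\<forall>v\<in>{}. norm ((U ^^ k) v - v) < \<epsilon>))" by simp
  then show ?case by blast
next
  case (insert y F)
  then obtain u \<delta> where d: "\<delta> > 0" and h: "\<And>k. norm ((U ^^ k) u - u) < \<delta> \<Longrightarrow> (\<forall>v\<in>F. norm ((U ^^ k) v - v) < \<epsilon>)"
    by blast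
  have md: "min \<delta> \<epsilon> > 0" using d assms(2) by simp
  obtain u' \<delta>' where "\<delta>' > 0" and h': "\<And>k. norm ((U ^^ k) u' - u') < \<delta>' \<Longrightarrow>
     norm ((U ^^ k) u - u) < min \<delta> \<epsilon> \<and> norm ((U ^^ k) y - y) < min \<delta> \<epsilon>"
    using pair[OF md, of u y] by blast
  show ?case
  proof (intro exI conjI allI impI)
    show "\<delta>' > 0" by fact
    fix k assume "norm ((U ^^ k) u' - u') < \<delta>'"
    from h'[OF this] h show "\<forall>v\<in>insert y F. norm ((U ^^ k) v - v) < \<epsilon>" by auto
  qed
qed

lemma mult_bound: "norm ((U ^^ (j * k)) v - v) \<le> j * norm ((U ^^ k) v - v)"
proof (induction j)
  case 0 then show ?case by simp
next
  case (Suc j)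
  have "(U ^^ (Suc j * k)) v - v = (U ^^ k) ((U ^^ (j * k)) v - v) + ((U ^^ k) v - v)"
    by (simp add: funpow_add T_diff)
  then have "norm ((U ^^ (Suc j * k)) v - v) \<le> norm ((U ^^ (j * k)) v - v) + norm ((U ^^ k) v - v)"
    by (metis T_norm norm_triangle_ineq)
  then show ?case using Suc by (simp add: algebra_simps)
qed

end

theorem proposition9p3:
  fixes J U :: "'a::{real_inner, complete_space} \<Rightarrow> 'a"
  assumes "complex_structure J"
    and "separable_type TYPE('a)"
    and "unitary_op J U"
  shows "recurrent U \<longleftrightarrow> rigid U"
proof -
  from assms(3) have add: "\<And>x y. U (x+y) = U x + U y"
    and sc: "\<And>c x. U (scaleJ J c x) = scaleJ J c (U x)" and su: "surj U"
    and ci: "\<And>x y. cinnerJ J (U x) (U y) = cinnerJ J x y" unfolding unitary_op_def by auto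
  have scR: "U (r *\<^sub>R x) = r *\<^sub>R U x" for r x
    using sc[of "complex_of_real r" x] by (simp add: scaleJ_def)
  have lin: "linear U" by (rule linearI) (auto simp: add scR)
  have inn: "U x \<bullet> U y = x \<bullet> y" for x y
    using arg_cong[OF ci[of x y], of Re] by (simp add: cinnerJ_def)
  interpret isoU U by (rule isoU.intro[OF lin inn su])
  have Tdist: "dist ((U ^^ k) x) ((U ^^ k) y) = dist x y" for k x y
    by (simp add: dist_norm T_diff[symmetric] T_norm)
  show ?thesis
  proof
    assume rec: "recurrent U"
    have pr: "\<exists>k>0. norm ((U ^^ k) u - u) < \<delta>" if "\<delta> > 0" for u \<delta>
    proof -
      have "open (ball u (\<delta>/2))" "ball u (\<delta>/2) \<noteq> {}" using that by auto
      then obtain k where k: "k > 0" "ball u (\<delta>/2) \<inter> (U ^^ k) -` ball u (\<delta>/2) \<noteq> {}"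
        using rec unfolding recurrent_def by blast
      then obtain y where y: "dist u y < \<delta>/2" "dist u ((U ^^ k) y) < \<delta>/2" by auto
      have "dist ((U ^^ k) u) u \<le> dist ((U ^^ k) u) ((U ^^ k) y) + dist ((U ^^ k) y) u"
        by (rule dist_triangle)
      also have "\<dots> < \<delta>" using y by (simp add: Tdist dist_commute)
      finally show ?thesis using k by (auto simp: dist_norm)
    qed
    have fin: "\<exists>k>0. \<forall>v\<in>F. norm ((U ^^ k) v - v) < \<epsilon>" if fF: "finite F" and eF: "\<epsilon> > 0" for F \<epsilon>
    proof -
      obtain u \<delta> where "\<delta> > 0" and h: "\<And>k. norm ((U ^^ k) u - u) < \<delta> \<Longrightarrow> (\<forall>v\<in>F. norm ((U ^^ k) v - v) < \<epsilon>)"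
        using ctrl[OF fF eF] by blast
      then obtain k where "k > 0" "norm ((U ^^ k) u - u) < \<delta>" using pr by blast
      then show ?thesis using h by blast
    qed
    have big: "\<exists>k>N. \<forall>v\<in>F. norm ((U ^^ k) v - v) < \<epsilon>" if fF: "finite F" and eF: "\<epsilon> > 0" for F \<epsilon> N
    proof -
      obtain k where k: "k > 0" "\<And>v. v \<in> F \<Longrightarrow> norm ((U ^^ k) v - v) < \<epsilon> / real (Suc N)"
        using fin[OF fF, of "\<epsilon> / real (Suc N)"] eF by auto
      have "N * 1 \<le> N * k" using k(1) by (intro mult_le_mono2) simp
      then have "N \<le> N * k" by (simp only: mult_1_right)
      then have "Suc N * k > N" using k(1) by (simp only: mult_Suc)
      moreover have "norm ((U ^^ (Suc N * k)) v - v) < \<epsilon>" if "v \<in> F" for v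
      proof -
        have "norm ((U ^^ (Suc N * k)) v - v) \<le> real (Suc N) * norm ((U ^^ k) v - v)" by (rule mult_bound)
        also have "\<dots> < real (Suc N) * (\<epsilon> / real (Suc N))"
          using k(2)[OF that] by (intro mult_strict_left_mono) auto
        also have "\<dots> = \<epsilon>" by simp
        finally show ?thesis .
      qed
      ultimately show ?thesis by blast
    qed
    obtain D :: "'a set" where D: "countable D" "closure D = UNIV"
      using assms(2) unfolding separable_type_def by auto
    have Dne: "D \<noteq> {}" using D(2) by auto
    define d where "d = from_nat_into D"
    have dD: "range d = D" unfolding d_def using range_from_nat_into[OF Dne D(1)] .
    define P where "P n k \<longleftrightarrow> (\<forall>i\<le>n. norm ((U ^^ k) (d i) - d i) < 1 / real (Suc n))" for n k
    have ex: "\<exists>k>N. P n k" for n N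
      using big[of "d ` {..n}" "1 / real (Suc n)" N] unfolding P_def by auto
    define kk where "kk = rec_nat (SOME k. k > 0 \<and> P 0 k) (\<lambda>n m. SOME k. k > m \<and> P (Suc n) k)"
    have kk0: "kk 0 > 0 \<and> P 0 (kk 0)"
      unfolding kk_def by simp (rule someI_ex, use ex[of 0 0] in auto)
    have kkS: "kk (Suc n) > kk n \<and> P (Suc n) (kk (Suc n))" for n
      unfolding kk_def by simp (rule someI_ex, use ex in auto)
    have sm: "strict_mono kk" using kkS by (simp add: strict_mono_Suc_iff)
    have pos: "kk n > 0" for n
    proof (induction n)
      case 0 show ?case using kk0 by simp
    next
      case (Suc n) show ?case using Suc kkS[of n] by simp
    qed
    have Pk: "P n (kk n)" for n using kk0 kkS by (cases n) auto
    have conv: "(\<lambda>n. (U ^^ kk n) x) \<longlonglongrightarrow> x" for x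
    proof (rule LIMSEQ_I)
      fix r :: real assume r: "r > 0"
      have "x \<in> closure D" using D(2) by simp
      have r3: "r/3 > 0" using r by simp
      from \<open>x \<in> closure D\<close> r3 obtain y where "y \<in> D" "dist y x < r/3"
        unfolding closure_approachable by blast
      then obtain i where yi: "dist (d i) x < r/3" using dD by auto
      obtain N :: nat where N: "1 / real (Suc N) < r/3"
        using r by (metis divide_pos_pos zero_less_numeral nat_approx_posE)
      show "\<exists>no. \<forall>n\<ge>no. norm ((U ^^ kk n) x - x) < r"
      proof (intro exI allI impI)
        fix n assume n: "n \<ge> max i N"
        have "norm ((U ^^ kk n) (d i) - d i) < 1 / real (Suc n)" using Pk[of n] n unfolding P_def by auto
        also have "\<dots> \<le> 1 / real (Suc N)" using n by (simp add: frac_le)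
        finally have e2: "dist ((U ^^ kk n) (d i)) (d i) < r/3" using N by (simp add: dist_norm)
        have "dist ((U ^^ kk n) x) x \<le> dist ((U ^^ kk n) x) ((U ^^ kk n) (d i)) + dist ((U ^^ kk n) (d i)) (d i) + dist (d i) x"
          using dist_triangle[of "(U ^^ kk n) x" x "d i"] dist_triangle[of "(U ^^ kk n) x" "d i" "(U ^^ kk n) (d i)"] by linarith
        also have "\<dots> < r" using yi e2 by (simp add: Tdist dist_commute)
        finally show "norm ((U ^^ kk n) x - x) < r" by (simp add: dist_norm)
      qed
    qed
    show "rigid U" unfolding rigid_def using sm pos conv by blast
  next
    assume "rigid U"
    then obtain k where k: "strict_mono k" "\<And>n. k n > 0" "\<And>x. (\<lambda>n. (U ^^ k n) x) \<longlonglongrightarrow> x"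
      unfolding rigid_def by blast
    show "recurrent U" unfolding recurrent_def
    proof (intro allI impI)
      fix V :: "'a set" assume V: "open V \<and> V \<noteq> {}"
      then obtain x where x: "x \<in> V" by auto
      have "eventually (\<lambda>n. (U ^^ k n) x \<in> V) sequentially"
        using topological_tendstoD[OF k(3)[of x]] V x by blast
      then obtain n where "(U ^^ k n) x \<in> V" using eventually_sequentially by auto
      then have "x \<in> V \<inter> (U ^^ k n) -` V" using x by auto
      then show "\<exists>k>0. V \<inter> (U ^^ k) -` V \<noteq> {}" using k(2) by blast
    qed
  qed
qed

end
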